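(* Let ${\mathbf{X}}={\mathbf{U}}_0{\mathbf{V}}_0^T$ with ${\mathbf{U}}_0\in\mathbb{R}_+^{m\times r}$, ${\mathbf{V}}_0\in\mathbb{R}_+^{n\times r}$ of full column rank $r\le\min\{m,n\}$. Let ${\mathbf{A}}_1\in\mathbb{R}^{r\times m}$, ${\mathbf{A}}_2\in\mathbb{R}^{n\times r}$ be such that ${\mathbf{A}}_1{\mathbf{X}}{\mathbf{A}}_2$ is invertible. Let $\lambda_1,\lambda_2>0$, $\sigma_1,\sigma_2\ge0$, and let $(\tilde{\mathbf{U}},\tilde{\mathbf{V}})$ be any minimizer over ${\mathbf{U}}\in\mathbb{R}_+^{m\times r},{\mathbf{V}}\in\mathbb{R}_+^{n\times r}$ of $$L({\mathbf{U}},{\mathbf{V}})+\sigma_1\|\mathbf{1}_m^T({\mathbf{X}}-{\mathbf{U}}{\mathbf{V}}^T)\|_2^2+\sigma_2\|({\mathbf{X}}-{\mathbf{U}}{\mathbf{V}}^T)\mathbf{1}_n\|_2^2,$$ where $L({\mathbf{U}},{\mathbf{V}})=\|{\mathbf{A}}_1({\mathbf{X}}-{\mathbf{U}}{\mathbf{V}}^T)\|_F^2+\|({\mathbf{X}}-{\mathbf{U}}{\mathbf{V}}^T){\mathbf{A}}_2\|_F^2+\lambda_1\|({\mathbf{I}}_m-\mathbf{P}_1){\mathbf{U}}{\mathbf{V}}^T\|_F^2+\lambda_2\|{\mathbf{U}}{\mathbf{V}}^T({\mathbf{I}}_n-\mathbf{P}_2)\|_F^2$, with $\mathbf{P}_1$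 the orthogonal projection onto the column space of ${\mathbf{X}}{\mathbf{A}}_2$ and $\mathbf{P}_2$ the orthogonal projection onto the row space of ${\mathbf{A}}_1{\mathbf{X}}$. Then ${\mathbf{X}}=\tilde{\mathbf{U}}\tilde{\mathbf{V}}^T$.
   Context: $\mathbb{R}_+^{a\times b}$ denotes the set of $a\times b$ entrywise nonnegative matrices; $\mathbf{1}_m\in\mathbb{R}^m$ is the all-ones vector. $\|\cdot\|_F$ is the Frobenius norm and $\|\cdot\|_2$ the Euclidean norm. *)

theory Defs
  imports "HOL-Analysis.Analysis"
begin

definition frob_sq :: "real^'n^'m \<Rightarrow> real" where
  "frob_sq A = (\<Sum>i\<in>UNIV. \<Sum>j\<in>UNIV. (A $ i $ j)^2)"

definition nonneg_mat :: "real^'n^'m \<Rightarrow> bool" where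
  "nonneg_mat A \<longleftrightarrow> (\<forall>i j. 0 \<le> A $ i $ j)"

definition ones :: "real^'n" where
  "ones = (\<chi> i. 1)"

definition orth_proj :: "(real^'n) set \<Rightarrow> real^'n^'n" where
  "orth_proj S = matrix (\<lambda>x. THE p. p \<in> S \<and> (\<forall>y\<in>S. (x - p) \<bullet> y = 0))"

end

theory Submission
  imports Defs
begin

lemma orth_proj_props:
  fixes S :: "(real^'n) set"
  assumes S: "subspace S"
  shows "\<And>x. orth_proj S *v x \<in> S"
    and "\<And>x y. y \<in> S \<Longrightarrow> (x - orth_proj S *v x) \<bullet> y = 0"
    and "transpose (orth_proj S) = orth_proj S"
proof -
  define P where "P x = (THE p. p \<in> S \<and> (\<forall>y\<in>S. (x - p) \<bullet> y = 0))" for x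
  have ex1: "\<exists>!p. p \<in> S \<and> (\<forall>y\<in>S. (x - p) \<bullet> y = 0)" for x
  proof -
    obtain y z where y: "y \<in> span S" and z: "\<And>w. w \<in> span S \<Longrightarrow> orthogonal z w"
      and xyz: "x = y + z"
      using orthogonal_subspace_decomp_exists[of S x] by blast
    have sp: "span S = S" using S by (simp add: span_eq_iff)
    have exi: "y \<in> S \<and> (\<forall>w\<in>S. (x - y) \<bullet> w = 0)"
      using y z sp xyz by (auto simp: orthogonal_def)
    show ?thesis
    proof (rule ex1I[of _ y])
      show "y \<in> S \<and> (\<forall>w\<in>S. (x - y) \<bullet> w = 0)" by (rule exi)
    next
      fix p assume p: "p \<in> S \<and> (\<forall>w\<in>S. (x - p) \<bullet> w = 0)"
      have d: "p - y \<in> S" using p exi S by (simp add: subspace_diff)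
      have "(p - y) \<bullet> (p - y) = (x - y) \<bullet> (p - y) - (x - p) \<bullet> (p - y)"
        by (simp add: inner_diff_left)
      also have "\<dots> = 0" using p exi d by simp
      finally show "p = y" by simp
    qed
  qed
  have Pp: "P x \<in> S \<and> (\<forall>y\<in>S. (x - P x) \<bullet> y = 0)" for x
    unfolding P_def by (rule theI'[OF ex1])
  have uniq: "p \<in> S \<Longrightarrow> (\<forall>y\<in>S. (x - p) \<bullet> y = 0) \<Longrightarrow> P x = p" for x p
    unfolding P_def by (rule the1_equality[OF ex1]) simp
  have lin: "linear P"
  proof (rule linearI)
    fix x y
    show "P (x + y) = P x + P y"
    proof (rule uniq)
      show "P x + P y \<in> S" using Pp S by (simp add: subspace_add)
      show "\<forall>w\<in>S. (x + y - (P x + P y)) \<bullet> w = 0"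
      proof
        fix w assume "w \<in> S"
        then have "(x - P x) \<bullet> w = 0" "(y - P y) \<bullet> w = 0" using Pp by auto
        then show "(x + y - (P x + P y)) \<bullet> w = 0"
          by (simp add: algebra_simps inner_diff_left inner_add_left)
      qed
    qed
  next
    fix c :: real and x
    show "P (c *\<^sub>R x) = c *\<^sub>R P x"
    proof (rule uniq)
      show "c *\<^sub>R P x \<in> S" using Pp S by (simp add: subspace_scale)
      show "\<forall>w\<in>S. (c *\<^sub>R x - c *\<^sub>R P x) \<bullet> w = 0"
      proof
        fix w assume "w \<in> S"
        then have "(x - P x) \<bullet> w = 0" using Pp by auto
        then show "(c *\<^sub>R x - c *\<^sub>R P x) \<bullet> w = 0"
          by (metis inner_scaleR_left mult_zero_right scaleR_right_diff_distrib)
      qed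
    qed
  qed
  have M: "orth_proj S = matrix P"
    unfolding orth_proj_def P_def by simp
  have Pv: "orth_proj S *v x = P x" for x
    using fun_cong[OF matrix_vector_mul(2)[OF lin]] M by simp
  show "\<And>x. orth_proj S *v x \<in> S" using Pp Pv by simp
  show "\<And>x y. y \<in> S \<Longrightarrow> (x - orth_proj S *v x) \<bullet> y = 0" using Pp Pv by simp
  have sa: "\<forall>x y. P x \<bullet> y = x \<bullet> P y"
  proof (intro allI)
    fix x y
    have "P x \<bullet> y = P x \<bullet> P y + (y - P y) \<bullet> P x"
      by (simp add: inner_diff_left inner_diff_right inner_commute)
    also have "\<dots> = P x \<bullet> P y" using Pp by simp
    also have "\<dots> = P x \<bullet> P y + (x - P x) \<bullet> P y" using Pp by simp
    also have "\<dots> = x \<bullet> P y" by (simp add: inner_diff_left)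
    finally show "P x \<bullet> y = x \<bullet> P y" .
  qed
  have "adjoint P = P" by (rule adjoint_unique[OF sa])
  then show "transpose (orth_proj S) = orth_proj S"
    using matrix_adjoint[OF lin] M by simp
qed

lemma orth_proj_id:
  fixes S :: "(real^'n) set"
  assumes S: "subspace S" and y: "y \<in> S"
  shows "orth_proj S *v y = y"
proof -
  have d: "y - orth_proj S *v y \<in> S"
    using orth_proj_props(1)[OF S] y S by (simp add: subspace_diff)
  have "(y - orth_proj S *v y) \<bullet> (y - orth_proj S *v y) = 0"
    using orth_proj_props(2)[OF S d] by simp
  then show ?thesis by simp
qed

lemma proj_kill:
  fixes S :: "(real^'n) set" and M :: "real^'k^'n"
  assumes S: "subspace S" and M: "\<And>v. M *v v \<in> S"
  shows "(mat 1 - orth_proj S) ** M = 0"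
  unfolding matrix_eq
proof
  fix v
  have "((mat 1 - orth_proj S) ** M) *v v = M *v v - orth_proj S *v (M *v v)"
    by (simp add: matrix_vector_mul_assoc[symmetric] matrix_vector_mult_diff_rdistrib)
  also have "\<dots> = 0" using orth_proj_id[OF S M] by simp
  finally show "((mat 1 - orth_proj S) ** M) *v v = 0 *v v" by simp
qed

lemma span_columns_range:
  fixes A :: "real^'n^'m"
  shows "span (columns A) = range ((*v) A)"
proof
  show "range ((*v) A) \<subseteq> span (columns A)"
    using matrix_vector_mult_in_columnspace by blast
  have sub: "subspace (range ((*v) A))"
    by (rule linear_subspace_image[OF matrix_vector_mul_linear subspace_UNIV])
  have "columns A \<subseteq> range ((*v) A)"
    by (auto simp: columns_image_basis)
  then show "span (columns A) \<subseteq> range ((*v) A)"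
    using span_minimal sub by blast
qed

lemma col_in:
  fixes X :: "real^'n^'m" and B :: "real^'r^'n" and C :: "real^'m^'r"
  assumes rk: "rank X \<le> CARD('r)" and inv: "invertible (C ** X ** B)"
  shows "X *v v \<in> span (columns (X ** B))"
proof -
  let ?R = "range ((*v) (X ** B))" and ?T = "range ((*v) X)"
  have RT: "?R \<subseteq> ?T"
    by (auto simp: matrix_vector_mul_assoc[symmetric])
  have "rank (C ** X ** B) = CARD('r)"
    using full_rank_injective inj_matrix_vector_mult[OF inv] by blast
  moreover have "rank (C ** X ** B) \<le> rank (X ** B)"
    by (metis matrix_mul_assoc rank_mul_le_right)
  ultimately have "dim ?T \<le> dim ?R" using rk by (simp add: rank_dim_range)
  then have "span ?R = span ?T" using dim_eq_span[OF RT] by simp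
  moreover have "X *v v \<in> span ?T" by (simp add: span_base)
  moreover have "span ?R = ?R"
    using linear_subspace_image[OF matrix_vector_mul_linear subspace_UNIV] span_eq_iff by blast
  ultimately show ?thesis
    by (simp add: span_columns_range)
qed

lemma frob_sq_nonneg: "frob_sq (A::real^'n^'m) \<ge> 0"
  unfolding frob_sq_def
  apply (rule sum_nonneg)
  apply (rule sum_nonneg)
  by simp

lemma frob_sq_zero: "frob_sq (A::real^'n^'m) = 0 \<Longrightarrow> A = 0"
  unfolding frob_sq_def
  by (subst (asm) sum_nonneg_eq_0_iff) (auto simp: sum_nonneg_eq_0_iff vec_eq_iff intro: sum_nonneg)

lemma frob_sq_0 [simp]: "frob_sq (0::real^'n^'m) = 0"
  unfolding frob_sq_def by simp

theorem mainTheorem5: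
  fixes U0 :: "real^'r^'m" and V0 :: "real^'r^'n"
    and A1 :: "real^'m^'r" and A2 :: "real^'r^'n"
    and lam1 lam2 sig1 sig2 :: real
    and X :: "real^'n^'m"
    and J :: "real^'r^'m \<Rightarrow> real^'r^'n \<Rightarrow> real"
    and Ut :: "real^'r^'m" and Vt :: "real^'r^'n"
  assumes X_def: "X = U0 ** transpose V0"
    and U0_nonneg: "nonneg_mat U0" and V0_nonneg: "nonneg_mat V0"
    and U0_rank: "rank U0 = CARD('r)" and V0_rank: "rank V0 = CARD('r)"
    and inv: "invertible (A1 ** X ** A2)"
    and lam: "lam1 > 0" "lam2 > 0"
    and sig: "sig1 \<ge> 0" "sig2 \<ge> 0"
    and J_def: "\<And>U V. J U V =
        frob_sq (A1 ** (X - U ** transpose V))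
      + frob_sq ((X - U ** transpose V) ** A2)
      + lam1 * frob_sq ((mat 1 - orth_proj (span (columns (X ** A2)))) ** (U ** transpose V))
      + lam2 * frob_sq ((U ** transpose V) ** (mat 1 - orth_proj (span (rows (A1 ** X)))))
      + sig1 * (norm (ones v* (X - U ** transpose V)))^2
      + sig2 * (norm ((X - U ** transpose V) *v ones))^2"
    and Ut_nonneg: "nonneg_mat Ut" and Vt_nonneg: "nonneg_mat Vt"
    and minimizer: "\<And>U V. nonneg_mat U \<Longrightarrow> nonneg_mat V \<Longrightarrow> J Ut Vt \<le> J U V"
  shows "X = Ut ** transpose Vt"
proof -
  define S1 where "S1 = span (columns (X ** A2))"
  define S2 where "S2 = span (rows (A1 ** X))"
  define P1 where "P1 = orth_proj S1"
  define P2 where "P2 = orth_proj S2"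
  have sS1: "subspace S1" and sS2: "subspace S2" unfolding S1_def S2_def by simp_all
  have rankX: "rank X \<le> CARD('r)"
    using rank_mul_le_left[of U0 "transpose V0"] U0_rank X_def by simp
  have colX: "X *v v \<in> S1" for v
    unfolding S1_def by (rule col_in[OF rankX inv])
  have invT: "invertible (transpose A2 ** transpose X ** transpose A1)"
    using transpose_invertible[OF inv] by (simp add: matrix_transpose_mul matrix_mul_assoc)
  have rowX: "transpose X *v v \<in> S2" for v
  proof -
    have "transpose X *v v \<in> span (columns (transpose X ** transpose A1))"
      by (rule col_in[OF _ invT]) (simp add: rank_transpose rankX)
    also have "columns (transpose X ** transpose A1) = rows (A1 ** X)"
      by (metis columns_transpose matrix_transpose_mul)
    finally show ?thesis unfolding S2_def .
  qed
  have Z1: "(mat 1 - P1) ** X = 0"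
    unfolding P1_def by (rule proj_kill[OF sS1 colX])
  have Z2': "(mat 1 - P2) ** transpose X = 0"
    unfolding P2_def by (rule proj_kill[OF sS2 rowX])
  have TP2: "transpose P2 = P2" unfolding P2_def by (rule orth_proj_props(3)[OF sS2])
  have Z2: "X ** (mat 1 - P2) = 0"
  proof -
    have td: "transpose (mat 1 - P2) = mat 1 - P2"
      using TP2 by (simp add: transpose_def vec_eq_iff mat_def)
    have "transpose (X ** (mat 1 - P2)) = (mat 1 - P2) ** transpose X"
      by (simp add: matrix_transpose_mul td)
    moreover have "transpose (0::real^'n^'m) = 0" by (simp add: transpose_def vec_eq_iff)
    ultimately have "transpose (X ** (mat 1 - P2)) = transpose 0" using Z2' by simp
    then show ?thesis by (metis transpose_transpose)
  qed
  have J0: "J U0 V0 = 0"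
    using Z1 Z2 unfolding J_def P1_def P2_def S1_def S2_def X_def[symmetric]
    by simp
  define M where "M = Ut ** transpose Vt"
  define E where "E = X - M"
  let ?a = "frob_sq (A1 ** E)" and ?b = "frob_sq (E ** A2)"
    and ?c = "frob_sq ((mat 1 - P1) ** M)" and ?d = "frob_sq (M ** (mat 1 - P2))"
    and ?e = "(norm (ones v* E))^2" and ?f = "(norm (E *v ones))^2"
  have JU: "J Ut Vt = ?a + ?b + lam1 * ?c + lam2 * ?d + sig1 * ?e + sig2 * ?f"
    unfolding J_def E_def M_def P1_def P2_def S1_def S2_def by simp
  have "J Ut Vt \<le> 0" using minimizer[OF U0_nonneg V0_nonneg] J0 by simp
  moreover have "?a \<ge> 0" "?b \<ge> 0" "?c \<ge> 0" "?d \<ge> 0" "?e \<ge> 0" "?f \<ge> 0"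
    by (simp_all add: frob_sq_nonneg)
  moreover have "lam1 * ?c \<ge> 0" "lam2 * ?d \<ge> 0" "sig1 * ?e \<ge> 0" "sig2 * ?f \<ge> 0"
    using lam sig by (simp_all add: frob_sq_nonneg)
  ultimately have "?a = 0" "lam1 * ?c = 0" unfolding JU by linarith+
  then have a0: "A1 ** E = 0" and c0: "(mat 1 - P1) ** M = 0"
    using lam by (auto dest: frob_sq_zero)
  have Mv: "M *v v \<in> S1" for v
  proof -
    have "((mat 1 - P1) ** M) *v v = M *v v - P1 *v (M *v v)"
      by (simp add: matrix_vector_mul_assoc[symmetric] matrix_vector_mult_diff_rdistrib)
    then have "M *v v = P1 *v (M *v v)" using c0 by simp
    then show ?thesis unfolding P1_def using orth_proj_props(1)[OF sS1] by metis
  qed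
  have "E *v v = 0" for v
  proof -
    have "E *v v \<in> S1" unfolding E_def
      using colX Mv sS1 by (simp add: matrix_vector_mult_diff_rdistrib subspace_diff)
    then obtain c where c: "E *v v = (X ** A2) *v c"
      unfolding S1_def span_columns_range by blast
    have "(A1 ** X ** A2) *v c = A1 *v (E *v v)"
      by (simp add: c matrix_vector_mul_assoc matrix_mul_assoc)
    also have "\<dots> = 0" using a0 by (simp add: matrix_vector_mul_assoc)
    finally have "(A1 ** X ** A2) *v c = (A1 ** X ** A2) *v 0" by simp
    then have "c = 0" using inj_matrix_vector_mult[OF inv] by (meson injD)
    then show ?thesis using c by simp
  qed
  then have "E = 0" by (simp add: matrix_eq)
  then show ?thesis unfolding E_def M_def by simp
qed

end
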